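(* There is an absolute constant $c>0$ such that for every celebrity game $\Gamma=\langle V,(w_u)_{u\in V},\alpha,\beta\rangle$ with $\beta>1$ that has a Nash equilibrium whose outcome graph is 2-edge-connected, and for every Nash equilibrium $S$ of $\Gamma$ whose outcome graph $G[S]$ is 2-edge-connected, we have $C(S)/\mathrm{opt}(\Gamma)\le c\,n/\beta$, where $n=|V|$.
   Context: A celebrity game $\Gamma=\langle V,(w_u)_{u\in V},\alpha,\beta\rangle$ consists of a set of players $V=\{1,\dots,n\}$, celebrity weights $w_u>0$, a link cost $\alpha>0$ and a critical distance $\beta$ with $1\le\beta\le n-1$. A strategy of player $u$ is a set $S_u\subseteq V\setminus\{u\}$; a strategy profile is $S=(S_1,\dots,S_n)$; its outcome graph $G[S]$ is the undirected graph on $V$ with edge set $\{\{u,v\}: u\in S_v\text{ or }v\in S_u\}$. With $d_G$ the graph distance (infinite between different connected components), the cost of player $u$ is $c_u(S)=\alpha|S_u|+\sum_{v:\,d_{G[S]}(u,v)>\beta}w_v$ and the social cost is $C(S)=\sum_{u\in V}c_u(S)$. $S$ is a Nash equilibrium if no player can strictly decrease its cost by changing only its own strategy. $\mathrm{opt}(\Gamma)=\min_S C(S)$ over all strategy profiles. *)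

theory Defs
  imports Main "HOL-Library.Extended_Nat"
begin

definition profile :: "nat \<Rightarrow> (nat \<Rightarrow> nat set) \<Rightarrow> bool" where
  "profile n S \<longleftrightarrow> (\<forall>u\<in>{1..n}. S u \<subseteq> {1..n} - {u}) \<and> (\<forall>u. u \<notin> {1..n} \<longrightarrow> S u = {})"

definition outcome_edges :: "nat \<Rightarrow> (nat \<Rightarrow> nat set) \<Rightarrow> nat set set" where
  "outcome_edges n S = {{u, v} | u v. u \<in> {1..n} \<and> v \<in> {1..n} \<and> (v \<in> S u \<or> u \<in> S v)}"

definition adj :: "'a set set \<Rightarrow> ('a \<times> 'a) set" where
  "adj E = {(u, v). u \<noteq> v \<and> {u, v} \<in> E}"

definition gdist :: "'a set set \<Rightarrow> 'a \<Rightarrow> 'a \<Rightarrow> enat" where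
  "gdist E u v = (if \<exists>k. (u, v) \<in> adj E ^^ k
                  then enat (LEAST k. (u, v) \<in> adj E ^^ k) else \<infinity>)"

definition connected_graph :: "'a set \<Rightarrow> 'a set set \<Rightarrow> bool" where
  "connected_graph V E \<longleftrightarrow> (\<forall>u\<in>V. \<forall>v\<in>V. (u, v) \<in> (adj E)\<^sup>*)"

definition two_edge_connected :: "'a set \<Rightarrow> 'a set set \<Rightarrow> bool" where
  "two_edge_connected V E \<longleftrightarrow> connected_graph V E \<and> (\<forall>e\<in>E. connected_graph V (E - {e}))"

definition player_cost :: "nat \<Rightarrow> (nat \<Rightarrow> real) \<Rightarrow> real \<Rightarrow> nat \<Rightarrow> (nat \<Rightarrow> nat set) \<Rightarrow> nat \<Rightarrow> real" where
  "player_cost n w \<alpha> \<beta> S u =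
     \<alpha> * real (card (S u)) + (\<Sum>v \<in> {v \<in> {1..n}. gdist (outcome_edges n S) u v > enat \<beta>}. w v)"

definition social_cost :: "nat \<Rightarrow> (nat \<Rightarrow> real) \<Rightarrow> real \<Rightarrow> nat \<Rightarrow> (nat \<Rightarrow> nat set) \<Rightarrow> real" where
  "social_cost n w \<alpha> \<beta> S = (\<Sum>u\<in>{1..n}. player_cost n w \<alpha> \<beta> S u)"

definition nash_eq :: "nat \<Rightarrow> (nat \<Rightarrow> real) \<Rightarrow> real \<Rightarrow> nat \<Rightarrow> (nat \<Rightarrow> nat set) \<Rightarrow> bool" where
  "nash_eq n w \<alpha> \<beta> S \<longleftrightarrow> profile n S \<and>
     (\<forall>u\<in>{1..n}. \<forall>T. T \<subseteq> {1..n} - {u} \<longrightarrow>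
        player_cost n w \<alpha> \<beta> S u \<le> player_cost n w \<alpha> \<beta> (S(u := T)) u)"

definition opt :: "nat \<Rightarrow> (nat \<Rightarrow> real) \<Rightarrow> real \<Rightarrow> nat \<Rightarrow> real" where
  "opt n w \<alpha> \<beta> = Min (social_cost n w \<alpha> \<beta> ` {S. profile n S})"

end

theory Submission
  imports Defs "HOL-Library.FuncSet"
begin

lemma adj_sym: "(u,v) \<in> adj E \<Longrightarrow> (v,u) \<in> adj E"
  by (auto simp: adj_def insert_commute)

lemma relpow_mono_gen: "(R::('a\<times>'a) set) \<subseteq> R' \<Longrightarrow> R ^^ k \<subseteq> R' ^^ k"
  by (induction k) (auto simp: relpow.simps)

lemma relpow_sym: "(\<And>u v. (u,v) \<in> R \<Longrightarrow> (v,u) \<in> R) \<Longrightarrow> (u,v) \<in> R ^^ k \<Longrightarrow> (v,u) \<in> R ^^ k"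
proof (induction k arbitrary: u v)
  case 0 then show ?case by simp
next
  case (Suc k)
  from Suc.prems(2) obtain m where "(u,m) \<in> R ^^ k" "(m,v) \<in> R" by auto
  then have "(m,u) \<in> R ^^ k" using Suc by blast
  moreover have "(v,m) \<in> R" using Suc.prems(1) \<open>(m,v)\<in>R\<close> by blast
  ultimately show ?case by (meson relpow_Suc_I2)
qed

lemma gdist_le: "(u,v) \<in> adj E ^^ k \<Longrightarrow> gdist E u v \<le> enat k"
  unfolding gdist_def by (auto intro: Least_le)

lemma gdist_enatD: "gdist E u v = enat d \<Longrightarrow> (u,v) \<in> adj E ^^ d"
  unfolding gdist_def by (auto split: if_splits intro: LeastI)

lemma gdist_fin: "gdist E u v \<noteq> \<infinity> \<longleftrightarrow> (\<exists>k. (u,v) \<in> adj E ^^ k)"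
  unfolding gdist_def by auto

lemma gdist_self[simp]: "gdist E u u = 0"
proof -
  have e: "\<exists>k. (u,u) \<in> adj E ^^ k" by (rule exI[of _ 0]) simp
  have "(LEAST k. (u,u) \<in> adj E ^^ k) = 0" by (rule Least_eq_0) simp
  then show ?thesis unfolding gdist_def using e by (simp add: zero_enat_def)
qed

lemma gdist_tri: "gdist E u w \<le> gdist E u v + gdist E v w"
proof (cases "gdist E u v = \<infinity> \<or> gdist E v w = \<infinity>")
  case True then show ?thesis by auto
next
  case False
  then obtain a b where a: "gdist E u v = enat a" and b: "gdist E v w = enat b" by auto
  have "(u,w) \<in> adj E ^^ (a+b)" using gdist_enatD[OF a] gdist_enatD[OF b] by (auto simp: relpow_add)
  then show ?thesis using a b gdist_le by fastforce
qed

lemma gdist_sym: "gdist E u v = gdist E v u"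
proof -
  have "(u,v) \<in> adj E ^^ k \<longleftrightarrow> (v,u) \<in> adj E ^^ k" for k
    using relpow_sym[of "adj E"] adj_sym by metis
  then show ?thesis unfolding gdist_def by simp
qed

lemma gdist_mono: "E \<subseteq> E' \<Longrightarrow> gdist E' u v \<le> gdist E u v"
proof (cases "gdist E u v")
  case (enat d)
  assume "E \<subseteq> E'"
  then have "adj E \<subseteq> adj E'" by (auto simp: adj_def)
  then have "(u,v) \<in> adj E' ^^ d" using gdist_enatD[OF enat] relpow_mono_gen by blast
  then show ?thesis using enat gdist_le by simp
qed simp

lemma gdist_edge: "{u,v} \<in> E \<Longrightarrow> u \<noteq> v \<Longrightarrow> gdist E u v \<le> 1"
proof -
  assume "{u,v} \<in> E" "u \<noteq> v"
  then have "(u,v) \<in> adj E ^^ 1" by (auto simp: adj_def)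
  then show ?thesis using gdist_le[where k=1] by (simp add: one_enat_def)
qed

lemma gdist_geo:
  assumes "gdist E a b = enat D" "s \<le> D"
  shows "\<exists>q. gdist E a q = enat s \<and> gdist E q b = enat (D - s)"
proof -
  have "(a,b) \<in> adj E ^^ (s + (D - s))" using gdist_enatD[OF assms(1)] assms(2) by simp
  then obtain q where q1: "(a,q) \<in> adj E ^^ s" and q2: "(q,b) \<in> adj E ^^ (D - s)"
    by (auto simp: relpow_add)
  have l1: "gdist E a q \<le> enat s" using gdist_le[OF q1] .
  have l2: "gdist E q b \<le> enat (D - s)" using gdist_le[OF q2] .
  have t: "enat D \<le> gdist E a q + gdist E q b" using gdist_tri assms(1) by metis
  from l1 obtain x where x: "gdist E a q = enat x" "x \<le> s" by (cases "gdist E a q") auto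
  from l2 obtain y where y: "gdist E q b = enat y" "y \<le> D - s" by (cases "gdist E q b") auto
  from t x y have "D \<le> x + y" by simp
  then have "x = s" "y = D - s" using x y assms(2) by auto
  then show ?thesis using x y by auto
qed

definition Eu :: "'a set set \<Rightarrow> 'a \<Rightarrow> 'a set set" where
  "Eu E u = {e \<in> E. u \<notin> e}"

lemma Eu_sub: "Eu E u \<subseteq> E" by (auto simp: Eu_def)

lemma stuck: "(\<forall>e\<in>E. v \<notin> e) \<Longrightarrow> (v,y) \<in> adj E ^^ k \<Longrightarrow> y = v"
proof (induction k arbitrary: y)
  case 0 then show ?case by simp
next
  case (Suc k)
  then obtain m where "(v,m) \<in> adj E" "(m,y) \<in> adj E ^^ k" using relpow_Suc_D2 by metis
  then show ?case using Suc.prems(1) by (auto simp: adj_def)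
qed

lemma stuck_Eu: "(u,y) \<in> adj (Eu E u) ^^ k \<Longrightarrow> y = u"
  using stuck[of "Eu E u" u y k] by (auto simp: Eu_def)

lemma decomp:
  "(x,y) \<in> adj E ^^ k \<Longrightarrow> y \<noteq> u \<Longrightarrow>
    (\<exists>k'\<le>k. (x,y) \<in> adj (Eu E u) ^^ k') \<or>
    (\<exists>z j. {u,z} \<in> E \<and> z \<noteq> u \<and> j < k \<and> (z,y) \<in> adj (Eu E u) ^^ j)"
proof (induction k arbitrary: x)
  case 0 then show ?case by auto
next
  case (Suc k)
  then obtain m where xm: "(x,m) \<in> adj E" and my: "(m,y) \<in> adj E ^^ k" using relpow_Suc_D2 by metis
  from Suc.IH[OF my Suc.prems(2)] show ?case
  proof
    assume "\<exists>k'\<le>k. (m,y) \<in> adj (Eu E u) ^^ k'"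
    then obtain k' where k': "k' \<le> k" "(m,y) \<in> adj (Eu E u) ^^ k'" by auto
    show ?thesis
    proof (cases "x = u")
      case True
      then have "{u,m} \<in> E" "m \<noteq> u" using xm by (auto simp: adj_def)
      then show ?thesis using k' by (intro disjI2 exI[of _ m] exI[of _ k']) auto
    next
      case False
      have "m \<noteq> u" using stuck_Eu k'(2) Suc.prems(2) by metis
      then have "(x,m) \<in> adj (Eu E u)" using xm False by (auto simp: adj_def Eu_def)
      then have "(x,y) \<in> adj (Eu E u) ^^ Suc k'" using k'(2) by (meson relpow_Suc_I2)
      then show ?thesis using k'(1) by (intro disjI1 exI[of _ "Suc k'"]) auto
    qed
  next
    assume "\<exists>z j. {u,z} \<in> E \<and> z \<noteq> u \<and> j < k \<and> (z,y) \<in> adj (Eu E u) ^^ j"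
    then obtain z j where "{u,z} \<in> E" "z \<noteq> u" "j < k" "(z,y) \<in> adj (Eu E u) ^^ j" by blast
    then show ?thesis by (intro disjI2 exI[of _ z] exI[of _ j]) auto
  qed
qed

lemma decomp_u:
  assumes "gdist E u y \<le> enat b" "y \<noteq> u"
  shows "\<exists>z. {u,z} \<in> E \<and> z \<noteq> u \<and> gdist (Eu E u) z y < enat b"
proof -
  obtain d where d: "gdist E u y = enat d" "d \<le> b" using assms(1) by (cases "gdist E u y") auto
  have "(u,y) \<in> adj E ^^ d" using gdist_enatD[OF d(1)] .
  have "\<not> (\<exists>k'\<le>d. (u,y) \<in> adj (Eu E u) ^^ k')" using stuck_Eu assms(2) by metis
  with decomp[OF \<open>(u,y) \<in> adj E ^^ d\<close> assms(2)] obtain z j where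
    z: "{u,z} \<in> E" "z \<noteq> u" "j < d" "(z,y) \<in> adj (Eu E u) ^^ j"
    by blast
  have "gdist (Eu E u) z y \<le> enat j" using gdist_le[OF z(4)] .
  also have "\<dots> < enat b" using z(3) d(2) by simp
  finally show ?thesis using z by blast
qed

lemma reach_in:
  assumes "\<forall>e\<in>E. e \<subseteq> V" "x \<in> V" "(x,q) \<in> adj E ^^ k"
  shows "q \<in> V"
  using assms(3)
proof (induction k arbitrary: q)
  case 0 then show ?case using assms(2) by simp
next
  case (Suc k)
  then obtain m where "(x,m) \<in> adj E ^^ k" "(m,q) \<in> adj E" by auto
  then show ?case using Suc.IH assms(1) by (auto simp: adj_def)
qed

lemma gdist_fin_in:
  assumes "\<forall>e\<in>E. e \<subseteq> V" "x \<in> V" "gdist E x q = enat d"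
  shows "q \<in> V"
  using reach_in[OF assms(1,2) gdist_enatD[OF assms(3)]] .

lemma card_points:
  assumes "finite A" "\<forall>s<m. \<exists>q\<in>A. gdist E x q = enat s"
  shows "m \<le> card A"
proof -
  define f where "f s = (SOME q. q \<in> A \<and> gdist E x q = enat s)" for s
  have f: "f s \<in> A \<and> gdist E x (f s) = enat s" if "s < m" for s
    unfolding f_def using someI_ex[of "\<lambda>q. q \<in> A \<and> gdist E x q = enat s"] assms(2) that by blast
  have "inj_on f {..<m}"
    by (rule inj_onI) (metis f lessThan_iff enat.inject)
  moreover have "f ` {..<m} \<subseteq> A" using f by auto
  ultimately show ?thesis using card_inj_on_le[OF _ _ assms(1)] by fastforce
qed

lemma packing:
  assumes "finite X" "finite V" "\<forall>x\<in>X. B x \<subseteq> V" "\<forall>x\<in>X. m \<le> card (B x)"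
    "\<forall>x\<in>X. \<forall>y\<in>X. x \<noteq> y \<longrightarrow> B x \<inter> B y = {}"
  shows "card X * m \<le> card V"
proof -
  have fin: "\<forall>x\<in>X. finite (B x)" using assms(2,3) finite_subset by blast
  have "card X * m = (\<Sum>x\<in>X. m)" by simp
  also have "\<dots> \<le> (\<Sum>x\<in>X. card (B x))" using assms(4) by (intro sum_mono) auto
  also have "\<dots> = card (\<Union>x\<in>X. B x)" using card_UN_disjoint[OF assms(1) fin] assms(5) by simp
  also have "\<dots> \<le> card V" using assms(2,3) by (intro card_mono) auto
  finally show ?thesis .
qed

lemma outcome_edges_sub: "\<forall>e\<in>outcome_edges n S. e \<subseteq> {1..n}"
  by (auto simp: outcome_edges_def)

lemma outcome_edges_mono: "S u \<subseteq> T \<Longrightarrow> outcome_edges n S \<subseteq> outcome_edges n (S(u:=T))"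
proof -
  assume "S u \<subseteq> T"
  then have h: "\<forall>a. S a \<subseteq> (S(u:=T)) a" by auto
  show ?thesis unfolding outcome_edges_def using h by blast
qed

lemma outcome_edges_drop:
  assumes "profile n S" "x \<in> S u" "u \<notin> S x"
  shows "outcome_edges n (S(u := S u - {x})) = outcome_edges n S - {{u,x}}"
proof -
  have ux: "x \<noteq> u" using assms(1,2) unfolding profile_def by blast
  define S' where "S' = S(u := S u - {x})"
  have sub: "\<forall>a. S' a \<subseteq> S a" unfolding S'_def by auto
  have S'u: "S' u = S u - {x}" and S'o: "\<And>a. a \<noteq> u \<Longrightarrow> S' a = S a" unfolding S'_def by auto
  show ?thesis unfolding S'_def[symmetric]
  proof
    show "outcome_edges n S' \<subseteq> outcome_edges n S - {{u,x}}"
    proof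
      fix e assume "e \<in> outcome_edges n S'"
      then obtain a b where e: "e = {a,b}" "a \<in> {1..n}" "b \<in> {1..n}" "b \<in> S' a \<or> a \<in> S' b"
        unfolding outcome_edges_def by blast
      have "e \<in> outcome_edges n S" using e sub unfolding outcome_edges_def by blast
      moreover have "e \<noteq> {u,x}"
      proof
        assume "e = {u,x}"
        then have "(a = u \<and> b = x) \<or> (a = x \<and> b = u)" using e(1) by (auto simp: doubleton_eq_iff)
        then show False using e(4) S'u S'o[OF ux] assms(3) by auto
      qed
      ultimately show "e \<in> outcome_edges n S - {{u,x}}" by blast
    qed
  next
    show "outcome_edges n S - {{u,x}} \<subseteq> outcome_edges n S'"
    proof
      fix e assume "e \<in> outcome_edges n S - {{u,x}}"
      then obtain a b where e: "e = {a,b}" "a \<in> {1..n}" "b \<in> {1..n}" "b \<in> S a \<or> a \<in> S b" "e \<noteq> {u,x}"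
        unfolding outcome_edges_def by blast
      have "b \<in> S' a \<or> a \<in> S' b"
      proof (cases "b \<in> S a")
        case True
        then show ?thesis using e(1,5) S'u S'o by (cases "a = u") (auto simp: insert_commute)
      next
        case False
        then have "a \<in> S b" using e(4) by blast
        then show ?thesis using e(1,5) S'u S'o by (cases "b = u") (auto simp: insert_commute)
      qed
      then show "e \<in> outcome_edges n S'" using e unfolding outcome_edges_def by blast
    qed
  qed
qed

locale game =
  fixes n :: nat and w :: "nat \<Rightarrow> real" and \<alpha> :: real and \<beta> :: nat and S :: "nat \<Rightarrow> nat set"
  assumes wpos: "\<forall>u\<in>{1..n}. w u > 0" and apos: "\<alpha> > 0" and b1: "1 < \<beta>" and bn: "\<beta> \<le> n - 1"
    and ne: "nash_eq n w \<alpha> \<beta> S" and tec: "two_edge_connected {1..n} (outcome_edges n S)"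
begin

abbreviation "V \<equiv> {1..n}"
abbreviation "E \<equiv> outcome_edges n S"
abbreviation "W \<equiv> sum w V"

lemma prof: "profile n S" using ne by (simp add: nash_eq_def)

lemma Su: "u \<in> V \<Longrightarrow> S u \<subseteq> V - {u}" using prof by (simp add: profile_def)

lemma Su_fin: "finite (S u)"
  using prof unfolding profile_def by (metis finite_Diff finite_atLeastAtMost finite.emptyI finite_subset)

lemma NE: "u \<in> V \<Longrightarrow> T \<subseteq> V - {u} \<Longrightarrow> player_cost n w \<alpha> \<beta> S u \<le> player_cost n w \<alpha> \<beta> (S(u:=T)) u"
  using ne by (simp add: nash_eq_def)

lemma conn: "a \<in> V \<Longrightarrow> b \<in> V \<Longrightarrow> \<exists>d. gdist E a b = enat d"
proof -
  assume "a \<in> V" "b \<in> V"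
  then have "(a,b) \<in> (adj E)\<^sup>*" using tec unfolding two_edge_connected_def connected_graph_def by blast
  then obtain k where "(a,b) \<in> adj E ^^ k" using rtrancl_power by blast
  then show ?thesis using gdist_fin by (metis not_infinity_eq)
qed

lemma W_nonneg_sub: "A \<subseteq> V \<Longrightarrow> sum w A \<le> W"
proof -
  assume A: "A \<subseteq> V"
  have "\<And>b. b \<in> V \<Longrightarrow> 0 \<le> w b" using wpos by (simp add: less_imp_le)
  then show ?thesis using A by (intro sum_mono2) auto
qed

lemma cost_le_W: "u \<in> V \<Longrightarrow> player_cost n w \<alpha> \<beta> S u \<le> W"
proof -
  assume u: "u \<in> V"
  have "player_cost n w \<alpha> \<beta> S u \<le> player_cost n w \<alpha> \<beta> (S(u:={})) u" using NE[OF u] by simp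
  also have "\<dots> = sum w {v \<in> V. enat \<beta> < gdist (outcome_edges n (S(u := {}))) u v}"
    unfolding player_cost_def by simp
  also have "\<dots> \<le> W" by (rule W_nonneg_sub) auto
  finally show ?thesis .
qed

lemma far_cover:
  assumes u: "u \<in> V"
  shows "(\<Sum>v \<in> {v \<in> V. gdist E u v > enat \<beta>}. w v) \<le> \<alpha> * (2 * real n / real \<beta>)"
proof -
  define P where "P = {X. X \<subseteq> V \<and> (\<forall>x\<in>X. \<forall>y\<in>X. x \<noteq> y \<longrightarrow> enat \<beta> \<le> gdist E x y)}"
  have finP: "finite P" unfolding P_def by (rule finite_subset[of _ "Pow V"]) auto
  have "{} \<in> P" unfolding P_def by auto
  then have "Max (card ` P) \<in> card ` P" using finP by (intro Max_in) auto
  then obtain X where X: "X \<in> P" "card X = Max (card ` P)" by auto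
  have Xmax: "card Y \<le> card X" if "Y \<in> P" for Y using X(2) finP that by simp
  have XV: "X \<subseteq> V" and Xsep: "\<forall>x\<in>X. \<forall>y\<in>X. x \<noteq> y \<longrightarrow> enat \<beta> \<le> gdist E x y"
    using X(1) unfolding P_def by auto
  have finX: "finite X" using XV finite_subset by blast
  have cover: "\<exists>x\<in>X. gdist E x v < enat \<beta>" if v: "v \<in> V" for v
  proof (rule ccontr)
    assume nc: "\<not> (\<exists>x\<in>X. gdist E x v < enat \<beta>)"
    have "v \<notin> X" using nc b1 by (metis gdist_self enat_0 not_le zero_less_iff_neq_zero bot_nat_0.not_eq_extremum
          gr_zeroI less_nat_zero_code zero_enat_def enat_ord_simps(2))
    have "insert v X \<in> P" unfolding P_def using XV v Xsep nc by (auto simp: not_less) (metis gdist_sym)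
    then have "card (insert v X) \<le> card X" using Xmax by blast
    then show False using \<open>v \<notin> X\<close> finX by simp
  qed
  define T where "T = (S u \<union> X) - {u}"
  have TV: "T \<subseteq> V - {u}" using Su[OF u] XV unfolding T_def by auto
  define E' where "E' = outcome_edges n (S(u:=T))"
  have EE': "E \<subseteq> E'" unfolding E'_def using Su[OF u] by (intro outcome_edges_mono) (auto simp: T_def)
  have near: "\<not> enat \<beta> < gdist E' u v" if v: "v \<in> V" for v
  proof -
    obtain x where x: "x \<in> X" "gdist E x v < enat \<beta>" using cover[OF v] by blast
    then obtain d where d: "gdist E x v = enat d" "d < \<beta>" by (cases "gdist E x v") auto
    show ?thesis
    proof (cases "x = u")
      case True
      then show ?thesis using gdist_mono[OF EE', of u v] x by (auto simp: not_less)
    next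
      case False
      have "{u,x} \<in> E'" unfolding E'_def outcome_edges_def using u x XV False
        by (intro CollectI exI[of _ u] exI[of _ x]) (auto simp: T_def)
      then have "gdist E' u x \<le> 1" using False by (intro gdist_edge) auto
      moreover have "gdist E' x v \<le> enat d" using gdist_mono[OF EE', of x v] d by simp
      ultimately have "gdist E' u v \<le> 1 + enat d" using gdist_tri[of E' u v x] add_mono order_trans by blast
      also have "\<dots> \<le> enat \<beta>" using d(2) by (simp add: one_enat_def)
      finally show ?thesis by (simp add: not_less)
    qed
  qed
  have emp: "{v \<in> V. enat \<beta> < gdist E' u v} = {}" using near by auto
  have "player_cost n w \<alpha> \<beta> (S(u:=T)) u = \<alpha> * real (card T)"
    unfolding player_cost_def E'_def[symmetric] emp by simp
  also have "\<dots> \<le> \<alpha> * (real (card (S u)) + real (card X))"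
  proof -
    have "card T \<le> card (S u \<union> X)" unfolding T_def using Su_fin finX by (intro card_mono) auto
    also have "\<dots> \<le> card (S u) + card X" by (rule card_Un_le)
    finally show ?thesis using apos by simp
  qed
  finally have "player_cost n w \<alpha> \<beta> S u \<le> \<alpha> * (real (card (S u)) + real (card X))"
    using NE[OF u TV] by linarith
  then have F: "(\<Sum>v \<in> {v \<in> V. gdist E u v > enat \<beta>}. w v) \<le> \<alpha> * real (card X)"
    unfolding player_cost_def by (simp add: algebra_simps)
  define r where "r = (\<beta> - 1) div 2"
  define B where "B x = {q \<in> V. gdist E x q \<le> enat r}" for x
  have Bsize: "r + 1 \<le> card (B x)" if x: "x \<in> V" for x
  proof (cases "\<exists>v\<in>V. enat r \<le> gdist E x v")
    case True
    then obtain v D where v: "v \<in> V" "gdist E x v = enat D" "r \<le> D" using conn[OF x] by fastforce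
    have "\<forall>s<r+1. \<exists>q\<in>B x. gdist E x q = enat s"
    proof (intro allI impI)
      fix s assume "s < r + 1"
      then obtain q where q: "gdist E x q = enat s" using gdist_geo[OF v(2), of s] v(3) by auto
      have "q \<in> V" using gdist_fin_in[OF outcome_edges_sub x q] .
      then show "\<exists>q\<in>B x. gdist E x q = enat s" using q \<open>s < r+1\<close> unfolding B_def by auto
    qed
    then show ?thesis by (intro card_points) (auto simp: B_def)
  next
    case False
    then have "B x = V" unfolding B_def by (auto simp: not_le less_imp_le)
    then show ?thesis using bn b1 unfolding r_def by simp
  qed
  have "card X * (r + 1) \<le> card V"
  proof (rule packing[OF finX])
    show "\<forall>x\<in>X. B x \<subseteq> V" unfolding B_def by auto
    show "\<forall>x\<in>X. r + 1 \<le> card (B x)" using Bsize XV by auto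
    show "\<forall>x\<in>X. \<forall>y\<in>X. x \<noteq> y \<longrightarrow> B x \<inter> B y = {}"
    proof (intro ballI impI)
      fix x y assume xy: "x \<in> X" "y \<in> X" "x \<noteq> y"
      show "B x \<inter> B y = {}"
      proof (rule ccontr)
        assume "B x \<inter> B y \<noteq> {}"
        then obtain q where "gdist E x q \<le> enat r" "gdist E y q \<le> enat r" unfolding B_def by auto
        then have "gdist E x y \<le> enat r + enat r" using gdist_tri[of E x y q] gdist_sym[of E q y]
          by (metis add_mono order_trans)
        moreover have "r + r < \<beta>"
        proof -
          have "2 * ((\<beta> - 1) div 2) \<le> \<beta> - 1" by (rule times_div_less_eq_dividend)
          then show ?thesis using b1 unfolding r_def by linarith
        qed
        ultimately have "gdist E x y < enat \<beta>"
        proof -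
          assume a1: "gdist E x y \<le> enat r + enat r" and a2: "r + r < \<beta>"
          have "enat r + enat r = enat (r + r)" by simp
          also have "\<dots> < enat \<beta>" using a2 by simp
          finally have c: "enat r + enat r < enat \<beta>" .
          show ?thesis using le_less_trans[OF a1 c] .
        qed
        then show False using Xsep xy by (simp add: not_le[symmetric])
      qed
    qed
  qed simp
  then have "card X * (r + 1) \<le> n" by simp
  then have cX: "real (card X) * (real r + 1) \<le> real n"
    by (metis of_nat_1 of_nat_add of_nat_le_iff of_nat_mult)
  have rb: "real \<beta> \<le> 2 * (real r + 1)"
  proof -
    have "\<beta> - 1 = 2 * ((\<beta> - 1) div 2) + (\<beta> - 1) mod 2" by simp
    moreover have "(\<beta> - 1) mod 2 < 2" by simp
    ultimately have "\<beta> - 1 < 2 * ((\<beta> - 1) div 2) + 2" by linarith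
    then have "\<beta> \<le> 2 * ((\<beta> - 1) div 2) + 2" using b1 by linarith
    then have "\<beta> \<le> 2 * r + 2" unfolding r_def by simp
    then have "real \<beta> \<le> real (2 * r + 2)" by (simp only: of_nat_le_iff)
    then show ?thesis by simp
  qed
  have "real (card X) * real \<beta> \<le> real (card X) * (2 * (real r + 1))"
    using rb by (intro mult_left_mono) auto
  also have "\<dots> \<le> 2 * real n" using cX by linarith
  finally have "real (card X) * real \<beta> \<le> 2 * real n" .
  then have "real (card X) \<le> 2 * real n / real \<beta>" using b1 by (simp add: field_simps)
  then have "\<alpha> * real (card X) \<le> \<alpha> * (2 * real n / real \<beta>)" using apos by (intro mult_left_mono) auto
  then show ?thesis using F by linarith
qed

end

lemma tri_le: "gdist E a b \<le> enat x \<Longrightarrow> gdist E b c \<le> enat y \<Longrightarrow> gdist E a c \<le> enat (x + y)"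
proof -
  assume "gdist E a b \<le> enat x" "gdist E b c \<le> enat y"
  then have "gdist E a b + gdist E b c \<le> enat x + enat y" by (rule add_mono)
  then show ?thesis using gdist_tri[of E a c b] by simp
qed

lemma enat_lt_le: "(g::enat) < enat b \<Longrightarrow> \<exists>d. g = enat d \<and> d < b"
  by (cases g) auto

lemma enat_le_lt: "(g::enat) \<le> enat x \<Longrightarrow> x < b \<Longrightarrow> g < enat b"
  by (cases g) auto

lemma enat_le_le: "(g::enat) \<le> enat x \<Longrightarrow> x \<le> b \<Longrightarrow> g \<le> enat b"
  by (cases g) auto

context game begin

lemma drop_same:
  assumes "x \<in> S u" "u \<in> S x" "u \<in> V"
  shows "outcome_edges n (S(u := S u - {x})) = E"
proof -
  have xu: "x \<noteq> u" using Su[OF assms(3)] assms(1) by auto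
  have "\<forall>a b. (b \<in> (S(u := S u - {x})) a \<or> a \<in> (S(u := S u - {x})) b) = (b \<in> S a \<or> a \<in> S b)"
    using xu assms(1,2) by auto
  then show ?thesis unfolding outcome_edges_def by simp
qed

lemma crit:
  assumes u: "u \<in> V" and x: "x \<in> S u"
  shows "u \<notin> S x \<and> (\<exists>y\<in>V. gdist E u y \<le> enat \<beta> \<and> enat \<beta> < gdist (E - {{u,x}}) u y)"
proof -
  define T where "T = S u - {x}"
  have TV: "T \<subseteq> V - {u}" using Su[OF u] unfolding T_def by auto
  have cT: "real (card T) = real (card (S u)) - 1"
  proof -
    have "card (S u) \<ge> 1" using x Su_fin[of u] by (metis One_nat_def Suc_leI card_gt_0_iff empty_iff)
    moreover have "card T = card (S u) - 1" using x Su_fin[of u] unfolding T_def by simp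
    ultimately show ?thesis by (simp add: of_nat_diff)
  qed
  have nc: "player_cost n w \<alpha> \<beta> S u \<le> player_cost n w \<alpha> \<beta> (S(u:=T)) u" using NE[OF u TV] .
  show ?thesis
  proof (cases "u \<in> S x")
    case True
    have "outcome_edges n (S(u:=T)) = E" unfolding T_def by (rule drop_same[OF x True u])
    then have "player_cost n w \<alpha> \<beta> (S(u:=T)) u = player_cost n w \<alpha> \<beta> S u - \<alpha>"
      unfolding player_cost_def by (simp add: cT algebra_simps)
    then show ?thesis using nc apos by linarith
  next
    case False
    have E': "outcome_edges n (S(u:=T)) = E - {{u,x}}"
      unfolding T_def by (rule outcome_edges_drop[OF prof x False])
    show ?thesis
    proof (rule ccontr)
      assume "\<not> ?thesis"
      then have no: "\<forall>y\<in>V. gdist E u y \<le> enat \<beta> \<longrightarrow> \<not> enat \<beta> < gdist (E - {{u,x}}) u y"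
        using False by blast
      have "{v \<in> V. enat \<beta> < gdist (E - {{u,x}}) u v} = {v \<in> V. enat \<beta> < gdist E u v}"
      proof (intro Collect_cong conj_cong refl iffI)
        fix v assume "v \<in> V" "enat \<beta> < gdist (E - {{u, x}}) u v"
        then show "enat \<beta> < gdist E u v" using no by (auto simp: not_le)
      next
        fix v assume "enat \<beta> < gdist E u v"
        then show "enat \<beta> < gdist (E - {{u, x}}) u v"
          using gdist_mono[of "E - {{u,x}}" E u v] by auto
      qed
      then have "player_cost n w \<alpha> \<beta> (S(u:=T)) u = player_cost n w \<alpha> \<beta> S u - \<alpha>"
        unfolding player_cost_def E' by (simp add: cT algebra_simps)
      then show False using nc apos by linarith
    qed
  qed
qed

definition "H u = Eu E u"
definition "N u = {z. {u,z} \<in> E \<and> z \<noteq> u}"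
definition "cell u x = {q \<in> V. \<forall>z\<in>N u - {x}. gdist (H u) x q < gdist (H u) z q}"

lemma H_sub: "\<forall>e\<in>H u. e \<subseteq> V"
  using outcome_edges_sub[of n S] unfolding H_def Eu_def by auto

lemma Su_N: "u \<in> V \<Longrightarrow> S u \<subseteq> N u"
proof
  fix x assume u: "u \<in> V" and x: "x \<in> S u"
  have "x \<in> V" "x \<noteq> u" using Su[OF u] x by auto
  then have "{u,x} \<in> E" unfolding outcome_edges_def using u x by blast
  then show "x \<in> N u" unfolding N_def using \<open>x \<noteq> u\<close> by auto
qed

lemma cell_points:
  assumes u: "u \<in> V" and x: "x \<in> S u" and s: "3 * s \<le> \<beta>"
  shows "\<exists>q\<in>cell u x. gdist (H u) x q = enat s"
proof -
  define E' where "E' = E - {{u,x}}"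
  define Z where "Z = N u - {x}"
  from crit[OF u x] obtain y where y: "y \<in> V" "gdist E u y \<le> enat \<beta>" "enat \<beta> < gdist E' u y"
    unfolding E'_def by blast
  have xV: "x \<in> V" "x \<noteq> u" using Su[OF u] x by auto
  have "y \<noteq> u" using y(3) by (auto simp: zero_enat_def)
  have HE': "Eu E' u = H u" unfolding E'_def H_def Eu_def by auto
  have HsubE': "H u \<subseteq> E'" unfolding E'_def H_def Eu_def by auto
  have far: "enat \<beta> \<le> gdist (H u) z y" if z: "z \<in> Z" for z
  proof (rule ccontr)
    assume "\<not> enat \<beta> \<le> gdist (H u) z y"
    then obtain d where d: "gdist (H u) z y = enat d" "d < \<beta>" using enat_lt_le by (metis not_le)
    have "{u,z} \<in> E" "z \<noteq> u" "z \<noteq> x" using z unfolding Z_def N_def by auto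
    then have "{u,z} \<in> E'" unfolding E'_def by (auto simp: doubleton_eq_iff)
    then have "gdist E' u z \<le> enat 1" using gdist_edge[of u z E'] \<open>z \<noteq> u\<close> by (simp add: one_enat_def)
    moreover have "gdist E' z y \<le> enat d" using gdist_mono[OF HsubE', of z y] d by simp
    ultimately have "gdist E' u y \<le> enat (1 + d)" by (rule tri_le)
    then have "gdist E' u y \<le> enat \<beta>" by (rule enat_le_le) (use d(2) in simp)
    then show False using y(3) by simp
  qed
  obtain z' where z': "{u,z'} \<in> E" "z' \<noteq> u" "gdist (Eu E u) z' y < enat \<beta>"
    using decomp_u[OF y(2) \<open>y \<noteq> u\<close>] by blast
  have "z' = x"
  proof (rule ccontr)
    assume "z' \<noteq> x"
    then have "z' \<in> Z" using z' unfolding Z_def N_def by auto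
    then show False using far z'(3) unfolding H_def by (simp add: not_le[symmetric])
  qed
  then obtain a where a: "gdist (H u) x y = enat a" "a < \<beta>" using z'(3) enat_lt_le unfolding H_def by blast
  have "{u,x} \<in> E" using Su_N[OF u] x unfolding N_def by auto
  then have "connected_graph V E'" using tec unfolding two_edge_connected_def E'_def by blast
  then have "(u,y) \<in> (adj E')\<^sup>*" using u y(1) unfolding connected_graph_def by blast
  then obtain k where "(u,y) \<in> adj E' ^^ k" using rtrancl_power by blast
  then have "gdist E' u y \<le> enat k" by (rule gdist_le)
  from decomp_u[OF this \<open>y \<noteq> u\<close>] obtain z0 where
    z0: "{u,z0} \<in> E'" "z0 \<noteq> u" "gdist (Eu E' u) z0 y < enat k" by blast
  have z0Z: "z0 \<in> Z" using z0(1,2) unfolding Z_def N_def E'_def by (auto simp: doubleton_eq_iff)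
  obtain d0 where d0: "gdist (H u) z0 y = enat d0" using z0(3) HE' enat_lt_le by metis
  have "gdist (H u) x z0 \<le> enat (a + d0)"
    using tri_le[of "H u" x y a z0 d0] a(1) d0 gdist_sym[of "H u" z0 y] by simp
  then obtain dz where dz: "gdist (H u) x z0 = enat dz" by (cases "gdist (H u) x z0") auto
  define D where "D = (LEAST d. \<exists>z\<in>Z. gdist (H u) x z = enat d)"
  have ex: "\<exists>d. \<exists>z\<in>Z. gdist (H u) x z = enat d" using z0Z dz by blast
  have "\<exists>z\<in>Z. gdist (H u) x z = enat D" unfolding D_def by (rule LeastI_ex[OF ex])
  then obtain zs where zs: "zs \<in> Z" "gdist (H u) x zs = enat D" by blast
  have Dmin: "enat D \<le> gdist (H u) x z" if "z \<in> Z" for z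
  proof (cases "gdist (H u) x z")
    case (enat d)
    then have "D \<le> d" unfolding D_def using that by (intro Least_le) blast
    then show ?thesis using enat by simp
  qed simp
  have Da: "\<beta> \<le> D + a"
  proof -
    have "gdist (H u) zs y \<le> enat (D + a)"
      using tri_le[of "H u" zs x D y a] zs(2) a(1) gdist_sym[of "H u" zs x] by simp
    then show ?thesis using far[OF zs(1)] by (metis enat_ord_simps(1) order_trans)
  qed
  show ?thesis
  proof (cases "s \<le> a")
    case True
    obtain q where q: "gdist (H u) x q = enat s" "gdist (H u) q y = enat (a - s)"
      using gdist_geo[OF a(1) True] by blast
    have qV: "q \<in> V" using gdist_fin_in[OF H_sub xV(1) q(1)] .
    have "enat s < gdist (H u) z q" if z: "z \<in> Z" for z
    proof (rule ccontr)
      assume "\<not> enat s < gdist (H u) z q"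
      then have "gdist (H u) z q \<le> enat s" by simp
      then have "gdist (H u) z y \<le> enat (s + (a - s))" using q(2) by (intro tri_le) auto
      then have "gdist (H u) z y < enat \<beta>" using True a(2) by (intro enat_le_lt) auto
      then show False using far[OF z] by simp
    qed
    then have "q \<in> cell u x" using qV unfolding cell_def Z_def by (auto simp: q(1))
    then show ?thesis using q(1) by blast
  next
    case False
    then have "s \<le> D" using Da s by linarith
    obtain q where q: "gdist (H u) x q = enat s" "gdist (H u) q zs = enat (D - s)"
      using gdist_geo[OF zs(2) \<open>s \<le> D\<close>] by blast
    have qV: "q \<in> V" using gdist_fin_in[OF H_sub xV(1) q(1)] .
    have "enat s < gdist (H u) z q" if z: "z \<in> Z" for z
    proof (rule ccontr)
      assume "\<not> enat s < gdist (H u) z q"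
      then have "gdist (H u) q z \<le> enat s" using gdist_sym[of "H u" z q] by simp
      then have "gdist (H u) x z \<le> enat (s + s)" using q(1) by (intro tri_le) auto
      moreover have "s + s < D" using False Da s by linarith
      ultimately have "gdist (H u) x z < enat D" by (rule enat_le_lt)
      then show False using Dmin[OF z] by simp
    qed
    then have "q \<in> cell u x" using qV unfolding cell_def Z_def by (auto simp: q(1))
    then show ?thesis using q(1) by blast
  qed
qed

lemma edges_count:
  assumes u: "u \<in> V"
  shows "card (S u) * (\<beta> div 3 + 1) \<le> n"
proof -
  have "card (S u) * (\<beta> div 3 + 1) \<le> card V"
  proof (rule packing[OF Su_fin])
    show "\<forall>x\<in>S u. cell u x \<subseteq> V" unfolding cell_def by auto
    show "\<forall>x\<in>S u. \<beta> div 3 + 1 \<le> card (cell u x)"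
    proof
      fix x assume x: "x \<in> S u"
      show "\<beta> div 3 + 1 \<le> card (cell u x)"
      proof (rule card_points)
        show "finite (cell u x)" unfolding cell_def by simp
        show "\<forall>s<\<beta> div 3 + 1. \<exists>q\<in>cell u x. gdist (H u) x q = enat s"
        proof (intro allI impI)
          fix s assume "s < \<beta> div 3 + 1"
          then have "s \<le> \<beta> div 3" by simp
          then have "3 * s \<le> 3 * (\<beta> div 3)" by simp
          also have "\<dots> \<le> \<beta>" by (rule times_div_less_eq_dividend)
          finally show "\<exists>q\<in>cell u x. gdist (H u) x q = enat s" by (rule cell_points[OF u x])
        qed
      qed
    qed
    show "\<forall>x\<in>S u. \<forall>y\<in>S u. x \<noteq> y \<longrightarrow> cell u x \<inter> cell u y = {}"
    proof (intro ballI impI)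
      fix x y assume xy: "x \<in> S u" "y \<in> S u" "x \<noteq> y"
      then have "y \<in> N u - {x}" "x \<in> N u - {y}" using Su_N[OF u] by auto
      show "cell u x \<inter> cell u y = {}"
      proof (rule ccontr)
        assume "cell u x \<inter> cell u y \<noteq> {}"
        then obtain q where "q \<in> cell u x" "q \<in> cell u y" by blast
        then have "gdist (H u) x q < gdist (H u) y q" "gdist (H u) y q < gdist (H u) x q"
          using \<open>y \<in> N u - {x}\<close> \<open>x \<in> N u - {y}\<close> unfolding cell_def by auto
        then show False by simp
      qed
    qed
  qed simp
  then show ?thesis by simp
qed

lemma edges_real:
  assumes u: "u \<in> V"
  shows "real (card (S u)) \<le> 3 * real n / real \<beta>"
proof -
  define k where "k = \<beta> div 3"
  have c: "real (card (S u)) * (real k + 1) \<le> real n"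
    using edges_count[OF u] unfolding k_def by (metis of_nat_1 of_nat_add of_nat_le_iff of_nat_mult)
  have "\<beta> = 3 * (\<beta> div 3) + \<beta> mod 3" by simp
  moreover have "\<beta> mod 3 < 3" by simp
  ultimately have "\<beta> < 3 * k + 3" unfolding k_def by linarith
  then have "real \<beta> < real (3 * k + 3)" by (simp only: of_nat_less_iff)
  then have b: "real \<beta> \<le> 3 * (real k + 1)" by simp
  have "real (card (S u)) * real \<beta> \<le> real (card (S u)) * (3 * (real k + 1))"
    using b by (intro mult_left_mono) auto
  also have "\<dots> \<le> 3 * real n" using c by linarith
  finally show ?thesis using b1 by (simp add: field_simps)
qed

lemma player_bound:
  assumes u: "u \<in> V"
  shows "player_cost n w \<alpha> \<beta> S u \<le> 5 * (real n / real \<beta>) * min \<alpha> W"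
proof -
  have pc: "player_cost n w \<alpha> \<beta> S u = \<alpha> * real (card (S u)) + (\<Sum>v \<in> {v \<in> V. gdist E u v > enat \<beta>}. w v)"
    unfolding player_cost_def by simp
  have nb: "1 \<le> real n / real \<beta>" using b1 bn by (simp add: field_simps)
  have Wnn: "0 \<le> W" using W_nonneg_sub[of "{}"] by simp
  have "\<alpha> * real (card (S u)) \<le> \<alpha> * (3 * real n / real \<beta>)"
    using edges_real[OF u] apos by (intro mult_left_mono) auto
  moreover have "\<alpha> * (3 * real n / real \<beta>) + \<alpha> * (2 * real n / real \<beta>) = 5 * (real n / real \<beta>) * \<alpha>"
    by (simp add: field_simps)
  ultimately have p1: "player_cost n w \<alpha> \<beta> S u \<le> 5 * (real n / real \<beta>) * \<alpha>"
    using pc far_cover[OF u] by linarith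
  have "player_cost n w \<alpha> \<beta> S u \<le> W" by (rule cost_le_W[OF u])
  also have "W \<le> 5 * (real n / real \<beta>) * W" using nb Wnn
    using mult_right_mono[of 1 "5 * (real n / real \<beta>)" W] by simp
  finally show ?thesis using p1 by (simp add: min_def)
qed

end

context game begin
lemma social_bound: "social_cost n w \<alpha> \<beta> S \<le> real n * (5 * (real n / real \<beta>) * min \<alpha> W)"
proof -
  have "social_cost n w \<alpha> \<beta> S \<le> (\<Sum>u\<in>V. 5 * (real n / real \<beta>) * min \<alpha> W)"
    unfolding social_cost_def by (intro sum_mono player_bound) auto
  then show ?thesis by simp
qed
end

lemma isolated_far:
  assumes prof: "profile n S'" and v: "v \<in> {1..n}" and iso: "S' v = {}" "\<forall>x\<in>{1..n}. v \<notin> S' x"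
  shows "sum w {1..n} - w v \<le> player_cost n w \<alpha> \<beta> S' v"
proof -
  have ne: "\<forall>e\<in>outcome_edges n S'. v \<notin> e"
    using iso unfolding outcome_edges_def by auto
  have "{y \<in> {1..n}. enat \<beta> < gdist (outcome_edges n S') v y} = {1..n} - {v}"
  proof (intro set_eqI iffI)
    fix y assume "y \<in> {1..n} - {v}"
    then have "\<not> (\<exists>k. (v,y) \<in> adj (outcome_edges n S') ^^ k)" using stuck[OF ne] by auto
    then have "gdist (outcome_edges n S') v y = \<infinity>" unfolding gdist_def by simp
    then show "y \<in> {y \<in> {1..n}. enat \<beta> < gdist (outcome_edges n S') v y}" using \<open>y \<in> {1..n} - {v}\<close> by simp
  next
    fix y assume "y \<in> {y \<in> {1..n}. enat \<beta> < gdist (outcome_edges n S') v y}"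
    then show "y \<in> {1..n} - {v}" by (auto simp: zero_enat_def)
  qed
  then show "sum w {1..n} - w v \<le> player_cost n w \<alpha> \<beta> S' v"
    unfolding player_cost_def using iso v by (simp add: sum_diff1)
qed

lemma sum_card_bound:
  assumes prof: "profile n S'"
  defines "I \<equiv> {v\<in>{1..n}. S' v = {} \<and> (\<forall>x\<in>{1..n}. v \<notin> S' x)}"
  shows "card ({1..n} - I) \<le> 2 * (\<Sum>u\<in>{1..n}. card (S' u))"
proof -
  define B where "B = {u\<in>{1..n}. S' u \<noteq> {}}"
  have fin: "finite (S' u)" for u using prof unfolding profile_def
    by (metis finite_Diff finite_atLeastAtMost finite.emptyI finite_subset)
  have "{1..n} - I \<subseteq> B \<union> (\<Union>u\<in>{1..n}. S' u)" unfolding I_def B_def by auto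
  then have "card ({1..n} - I) \<le> card (B \<union> (\<Union>u\<in>{1..n}. S' u))"
    using fin by (intro card_mono) (auto simp: B_def)
  also have "\<dots> \<le> card B + card (\<Union>u\<in>{1..n}. S' u)" by (rule card_Un_le)
  also have "card (\<Union>u\<in>{1..n}. S' u) \<le> (\<Sum>u\<in>{1..n}. card (S' u))" by (rule card_UN_le) simp
  also have "card B \<le> (\<Sum>u\<in>{1..n}. card (S' u))"
  proof -
    have "card B = (\<Sum>u\<in>B. 1)" by simp
    also have "\<dots> \<le> (\<Sum>u\<in>B. card (S' u))" using fin unfolding B_def
      by (intro sum_mono) (simp add: Suc_leI card_gt_0_iff)
    also have "\<dots> \<le> (\<Sum>u\<in>{1..n}. card (S' u))" unfolding B_def by (intro sum_mono2) auto
    finally show ?thesis .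
  qed
  finally show ?thesis by simp
qed

lemma cost_lower:
  assumes prof: "profile n S'" and n3: "3 \<le> n" and wpos: "\<forall>u\<in>{1..n}. w u > 0" and apos: "\<alpha> > 0"
  shows "real n / 4 * min \<alpha> (sum w {1..n}) \<le> social_cost n w \<alpha> \<beta> S'"
proof -
  define V where "V = {1..n::nat}"
  define W where "W = sum w V"
  define I where "I = {v\<in>V. S' v = {} \<and> (\<forall>x\<in>V. v \<notin> S' x)}"
  define F where "F u = (\<Sum>v \<in> {v \<in> V. gdist (outcome_edges n S') u v > enat \<beta>}. w v)" for u
  define C where "C = (\<Sum>u\<in>V. card (S' u))"
  have wnn: "\<And>v. v \<in> V \<Longrightarrow> 0 \<le> w v" using wpos unfolding V_def by (simp add: less_imp_le)
  have IV: "I \<subseteq> V" unfolding I_def by auto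
  have Fnn: "0 \<le> F u" for u unfolding F_def using wnn by (intro sum_nonneg) auto
  have sc: "social_cost n w \<alpha> \<beta> S' = \<alpha> * real C + (\<Sum>u\<in>V. F u)"
    unfolding social_cost_def player_cost_def F_def C_def V_def by (simp add: sum.distrib sum_distrib_left)
  have FI: "W - w v \<le> F v" if "v \<in> I" for v
    using isolated_far[OF prof, of v w \<alpha> \<beta>] that unfolding I_def V_def W_def F_def player_cost_def
    by (simp add: not_less)
  have "(\<Sum>v\<in>I. W - w v) \<le> (\<Sum>v\<in>I. F v)" using FI by (rule sum_mono)
  also have "\<dots> \<le> (\<Sum>u\<in>V. F u)" using IV Fnn by (intro sum_mono2) (auto simp: V_def)
  finally have s1: "(\<Sum>v\<in>I. W - w v) \<le> (\<Sum>u\<in>V. F u)" .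
  have "(\<Sum>v\<in>I. W - w v) = real (card I) * W - sum w I" by (simp add: sum_subtractf)
  moreover have "sum w I \<le> W" unfolding W_def using IV wnn by (intro sum_mono2) (auto simp: V_def)
  ultimately have s2: "real (card I) * W - W \<le> (\<Sum>u\<in>V. F u)" using s1 by linarith
  have s3: "0 \<le> (\<Sum>u\<in>V. F u)" using Fnn by (simp add: sum_nonneg)
  have cI: "card (V - I) \<le> 2 * C" using sum_card_bound[OF prof] unfolding C_def I_def V_def by simp
  have finV: "finite V" unfolding V_def by simp
  have finI: "finite I" using finite_subset[OF IV finV] .
  have cV: "card V = n" unfolding V_def by simp
  have cVI: "card (V - I) = n - card I" using card_Diff_subset[OF finI IV] cV by simp
  have cIn: "card I \<le> n" using card_mono[OF finV IV] cV by simp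
  have Wnn: "0 \<le> W" unfolding W_def using wnn by (intro sum_nonneg) auto
  have "n - card I \<le> 2 * C" using cI cVI by simp
  then have "real (n - card I) \<le> real (2 * C)" by (simp only: of_nat_le_iff)
  then have C2: "real n - real (card I) \<le> 2 * real C" using of_nat_diff[OF cIn] by simp
  show ?thesis
  proof (cases "2 * card I \<le> n")
    case True
    then have "real (2 * card I) \<le> real n" by (simp only: of_nat_le_iff)
    then have "real n / 4 \<le> real C" using C2 by simp
    then have "\<alpha> * (real n / 4) \<le> \<alpha> * real C" using apos by (intro mult_left_mono) auto
    then have "real n / 4 * \<alpha> \<le> social_cost n w \<alpha> \<beta> S'" using sc s3 by (simp add: mult.commute)
    moreover have "real n / 4 * min \<alpha> (sum w {1..n}) \<le> real n / 4 * \<alpha>" by (intro mult_left_mono) auto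
    ultimately show ?thesis by linarith
  next
    case False
    then have "n + 1 \<le> 2 * card I" by simp
    then have "real (n + 1) \<le> real (2 * card I)" by (simp only: of_nat_le_iff)
    then have "real n + 1 \<le> 2 * real (card I)" by simp
    moreover have "real n \<ge> 3" using n3 by simp
    ultimately have "real n / 4 \<le> real (card I) - 1" by linarith
    then have "real n / 4 * W \<le> (real (card I) - 1) * W" using Wnn by (rule mult_right_mono)
    moreover have "(real (card I) - 1) * W = real (card I) * W - W" by (simp add: algebra_simps)
    moreover have "0 \<le> \<alpha> * real C" using apos by simp
    ultimately have "real n / 4 * W \<le> social_cost n w \<alpha> \<beta> S'" using sc s2 by linarith
    moreover have "real n / 4 * min \<alpha> (sum w {1..n}) \<le> real n / 4 * W" unfolding W_def V_def
      by (intro mult_left_mono) auto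
    ultimately show ?thesis by linarith
  qed
qed



lemma finite_profiles: "finite {S. profile n S}"
proof -
  define g where "g f = (\<lambda>u. if u \<in> {1..n} then f u else ({}::nat set))" for f :: "nat \<Rightarrow> nat set"
  have "{S. profile n S} \<subseteq> g ` (PiE {1..n} (\<lambda>_. Pow {1..n}))"
  proof
    fix S assume "S \<in> {S. profile n S}"
    then have p: "profile n S" by simp
    have "restrict S {1..n} \<in> PiE {1..n} (\<lambda>_. Pow {1..n})"
      using p unfolding profile_def by (auto simp: restrict_PiE_iff)
    moreover have "g (restrict S {1..n}) = S"
    proof
      fix u show "g (restrict S {1..n}) u = S u"
        unfolding g_def using p unfolding profile_def by (cases "u \<in> {1..n}") auto
    qed
    ultimately show "S \<in> g ` (PiE {1..n} (\<lambda>_. Pow {1..n}))" by (metis image_eqI)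
  qed
  moreover have "finite (g ` (PiE {1..n} (\<lambda>_. Pow {1..n})))" by (intro finite_imageI finite_PiE) auto
  ultimately show ?thesis by (rule finite_subset)
qed

lemma opt_lower:
  assumes n3: "3 \<le> n" and wpos: "\<forall>u\<in>{1..n}. w u > 0" and apos: "\<alpha> > 0"
  shows "real n / 4 * min \<alpha> (sum w {1..n}) \<le> opt n w \<alpha> \<beta>"
proof -
  have "profile n (\<lambda>_. {})" unfolding profile_def by simp
  then have ne: "social_cost n w \<alpha> \<beta> ` {S. profile n S} \<noteq> {}" by blast
  have fin: "finite (social_cost n w \<alpha> \<beta> ` {S. profile n S})" using finite_profiles by simp
  show ?thesis unfolding opt_def using cost_lower[OF _ n3 wpos apos]
    by (subst Min_ge_iff[OF fin ne]) auto
qed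

theorem proposition8:
  shows "\<exists>c::real. c > 0 \<and>
    (\<forall>n (w::nat \<Rightarrow> real) (\<alpha>::real) (\<beta>::nat) S.
       (\<forall>u\<in>{1..n}. w u > 0) \<longrightarrow> \<alpha> > 0 \<longrightarrow> 1 < \<beta> \<longrightarrow> \<beta> \<le> n - 1 \<longrightarrow>
       (\<exists>S'. nash_eq n w \<alpha> \<beta> S' \<and> two_edge_connected {1..n} (outcome_edges n S')) \<longrightarrow>
       nash_eq n w \<alpha> \<beta> S \<longrightarrow> two_edge_connected {1..n} (outcome_edges n S) \<longrightarrow>
       social_cost n w \<alpha> \<beta> S / opt n w \<alpha> \<beta> \<le> c * real n / real \<beta>)"
proof (intro exI[of _ 20] conjI allI impI)
  fix n w \<alpha> \<beta> S
  assume wpos: "\<forall>u\<in>{1..n}. w u > (0::real)" and apos: "(\<alpha>::real) > 0" and b1: "1 < \<beta>"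
    and bn: "\<beta> \<le> n - 1" and ne: "nash_eq n w \<alpha> \<beta> S"
    and tec: "two_edge_connected {1..n} (outcome_edges n S)"
  interpret game n w \<alpha> \<beta> S using wpos apos b1 bn ne tec by unfold_locales
  have n3: "3 \<le> n" using b1 bn by linarith
  have Wpos: "0 < W" using wpos n3 by (intro sum_pos) auto
  define m where "m = min \<alpha> W"
  have mpos: "0 < m" unfolding m_def using Wpos apos by simp
  have ol: "real n / 4 * m \<le> opt n w \<alpha> \<beta>" unfolding m_def by (rule opt_lower[OF n3 wpos apos])
  have npos: "0 < real n" using n3 by simp
  have bpos: "0 < real \<beta>" using b1 by simp
  have opos: "0 < opt n w \<alpha> \<beta>" using ol mpos npos by (smt (verit) mult_pos_pos divide_pos_pos)
  have sc: "social_cost n w \<alpha> \<beta> S \<le> real n * (5 * (real n / real \<beta>) * m)"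
    using social_bound unfolding m_def .
  have "real n * (5 * (real n / real \<beta>) * m) = 20 * real n / real \<beta> * (real n / 4 * m)"
    by (simp add: field_simps)
  also have "\<dots> \<le> 20 * real n / real \<beta> * opt n w \<alpha> \<beta>"
    using ol npos bpos by (intro mult_left_mono) auto
  finally have "social_cost n w \<alpha> \<beta> S \<le> 20 * real n / real \<beta> * opt n w \<alpha> \<beta>" using sc by linarith
  then show "social_cost n w \<alpha> \<beta> S / opt n w \<alpha> \<beta> \<le> 20 * real n / real \<beta>"
    using opos by (simp add: pos_divide_le_eq)
qed simp

end
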